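(* Let $X$ be a finite or countably infinite set, let $q$ be a probability distribution on $X$, and let $\mathcal{S}=\langle x_1,\dots,x_n\rangle\in X^n$ be a sample. Let $a\ge 0$ and suppose $f:X\to[0,1]$ has training advantage $\hat\alpha(f)\ge a$. Define the probability distribution $q'(x)=q(x)e^{-af(x)}/Z_{q'}$ where $Z_{q'}=\sum_{x\in X}q(x)e^{-af(x)}$. Then $$\hat{L}(q';\mathcal{S})\le\hat{L}(q;\mathcal{S})-a^2/2.$$
   Context: The log-loss of a distribution $q$ on the sample is $\hat{L}(q;\mathcal{S})=-\frac{1}{n}\sum_{i=1}^n\log q(x_i)$. The empirical expectation is $\hat{\mathrm{E}}_{\mathcal{S}}[h(x)]=\frac1n\sum_{i=1}^n h(x_i)$. The training advantage of $f:X\to[0,1]$ (relative to $q$ and $\mathcal{S}$) is $\hat\alpha(f)=\mathrm{E}_{x\sim q}[f(x)]-\hat{\mathrm{E}}_{\mathcal{S}}[f(x)]$. *)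

theory Defs
  imports "HOL-Probability.Probability"
begin

definition log_loss :: "('a \<Rightarrow> real) \<Rightarrow> 'a list \<Rightarrow> real" where
  "log_loss q xs = - (1 / real (length xs)) * (\<Sum>x\<leftarrow>xs. ln (q x))"

definition emp_exp :: "'a list \<Rightarrow> ('a \<Rightarrow> real) \<Rightarrow> real" where
  "emp_exp xs h = (1 / real (length xs)) * (\<Sum>x\<leftarrow>xs. h x)"

definition train_adv :: "'a pmf \<Rightarrow> 'a list \<Rightarrow> ('a \<Rightarrow> real) \<Rightarrow> real" where
  "train_adv q xs f = measure_pmf.expectation q f - emp_exp xs f"

definition Zq :: "'a pmf \<Rightarrow> real \<Rightarrow> ('a \<Rightarrow> real) \<Rightarrow> real" where
  "Zq q a f = (\<Sum>\<^sub>\<infinity>x\<in>UNIV. pmf q x * exp (- a * f x))"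

definition reweight :: "'a pmf \<Rightarrow> real \<Rightarrow> ('a \<Rightarrow> real) \<Rightarrow> 'a \<Rightarrow> real" where
  "reweight q a f x = pmf q x * exp (- a * f x) / Zq q a f"

end

theory Submission
  imports Defs
begin

lemma exp_neg_le_quad:
  fixes t :: real assumes "t \<ge> 0"
  shows "exp (- t) \<le> 1 - t + t\<^sup>2 / 2"
proof -
  have p: "1 + t + t\<^sup>2/2 > 0" using assms by (simp add: add_pos_nonneg)
  have "1 + t + t\<^sup>2/2 \<le> exp t" using exp_lower_Taylor_quadratic[OF assms] by simp
  hence "exp (- t) \<le> 1 / (1 + t + t\<^sup>2/2)"
    using p by (simp add: exp_minus field_simps)
  also have "\<dots> \<le> 1 - t + t\<^sup>2 / 2"
  proof -
    have "(1 + t + t\<^sup>2/2) * (1 - t + t\<^sup>2/2) = 1 + t^4/4"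
      by (simp add: algebra_simps power2_eq_square power4_eq_xxxx)
    hence "1 \<le> (1 - t + t\<^sup>2 / 2) * (1 + t + t\<^sup>2/2)" by (simp add: mult.commute)
    thus ?thesis using p by (simp add: divide_le_eq)
  qed
  finally show ?thesis .
qed

lemma sum_list_ln_split:
  assumes "\<And>x. x \<in> set xs \<Longrightarrow> p x > 0" and "Z > 0"
  shows "(\<Sum>x\<leftarrow>xs. ln (p x * exp (- a * f x) / Z)) =
         (\<Sum>x\<leftarrow>xs. ln (p x)) - a * (\<Sum>x\<leftarrow>xs. f x) - real (length xs) * ln Z"
  using assms
proof (induction xs)
  case Nil then show ?case by simp
next
  case (Cons y ys)
  have "ln (p y * exp (- a * f y) / Z) = ln (p y) - a * f y - ln Z"
    using Cons.prems(1)[of y] Cons.prems(2) by (simp add: ln_div ln_mult)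
  with Cons show ?case by (simp add: algebra_simps)
qed

theorem lemma1:
  fixes q :: "'a::countable pmf" and xs :: "'a list" and a :: real and f :: "'a \<Rightarrow> real"
  assumes "xs \<noteq> []"
    and "\<And>x. x \<in> set xs \<Longrightarrow> pmf q x > 0"
    and "a \<ge> 0"
    and "\<And>x. 0 \<le> f x \<and> f x \<le> 1"
    and "train_adv q xs f \<ge> a"
  shows "log_loss (reweight q a f) xs \<le> log_loss (pmf q) xs - a\<^sup>2 / 2"
proof -
  define g where "g x = exp (- a * f x)" for x
  have gb: "0 < g x \<and> g x \<le> 1" for x using assms(3) assms(4)[of x] unfolding g_def
    by (simp add: mult_nonneg_nonneg)
  have abs: "Infinite_Set_Sum.abs_summable_on (\<lambda>x. pmf q x * g x) UNIV"
    by (rule abs_summable_on_comparison_test'[OF pmf_abs_summable[of q UNIV]])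
       (use gb in \<open>auto simp: abs_mult intro!: mult_left_le, metis abs_of_pos\<close>)
  have Zeq: "Zq q a f = measure_pmf.expectation q g"
    unfolding Zq_def pmf_expectation_eq_infsetsum g_def[symmetric]
    by (rule infsetsum_infsum[symmetric, OF abs])
  have intg: "integrable (measure_pmf q) g"
    by (rule measure_pmf.integrable_const_bound[where B=1]) (use gb in \<open>auto intro!: AE_I2 simp: abs_le_iff less_imp_le\<close>)
  have intf: "integrable (measure_pmf q) f"
    by (rule measure_pmf.integrable_const_bound[where B=1]) (use assms(4) in \<open>auto intro!: AE_I2 simp: abs_le_iff\<close>)
  have bnd: "g x \<le> 1 - a * f x + a\<^sup>2 / 2" for x
  proof -
    have "g x \<le> 1 - a * f x + (a * f x)\<^sup>2 / 2"
      unfolding g_def using exp_neg_le_quad[of "a * f x"] assms(3) assms(4)[of x] by simp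
    moreover have "(a * f x)\<^sup>2 \<le> a\<^sup>2"
      using assms(3) assms(4)[of x] by (simp add: power_mult_distrib power_le_one mult_left_le)
    ultimately show ?thesis by simp
  qed
  have "measure_pmf.expectation q g \<le> measure_pmf.expectation q (\<lambda>x. 1 - a * f x + a\<^sup>2 / 2)"
    by (rule integral_mono[OF intg]) (use intf bnd in auto)
  also have "\<dots> = 1 - a * measure_pmf.expectation q f + a\<^sup>2 / 2"
    using intf by simp
  finally have Zle: "Zq q a f \<le> 1 - a * measure_pmf.expectation q f + a\<^sup>2 / 2"
    using Zeq by simp
  obtain x0 where x0: "x0 \<in> set xs" using assms(1) by (cases xs) auto
  have "0 < pmf q x0 * g x0" using assms(2)[OF x0] gb by simp
  also have "pmf q x0 * g x0 \<le> measure_pmf.expectation q g"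
  proof -
    have "measure_pmf.expectation q g = infsetsum (\<lambda>x. pmf q x * g x) UNIV"
      by (rule pmf_expectation_eq_infsetsum)
    also have "\<dots> \<ge> infsetsum (\<lambda>x. pmf q x * g x) {x0}"
      proof (rule infsetsum_mono_neutral_left)
      show "\<And>x. x \<in> UNIV - {x0} \<Longrightarrow> 0 \<le> pmf q x * g x"
        using gb by (simp add: less_imp_le)
    qed (use abs in auto)
    finally show ?thesis by simp
  qed
  finally have Zpos: "Zq q a f > 0" using Zeq by simp
  have lnZ: "ln (Zq q a f) \<le> - a * measure_pmf.expectation q f + a\<^sup>2 / 2"
    using ln_le_minus_one[OF Zpos] Zle by simp
  define n where "n = real (length xs)"
  have npos: "n > 0" using assms(1) by (simp add: n_def)
  define S where "S = (\<Sum>x\<leftarrow>xs. ln (pmf q x))"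
  define F where "F = (\<Sum>x\<leftarrow>xs. f x)"
  have LL: "log_loss (reweight q a f) xs = - (1/n) * S + a * (F / n) + ln (Zq q a f)"
    unfolding log_loss_def reweight_def
    using sum_list_ln_split[of xs "pmf q" "Zq q a f" a f, OF assms(2) Zpos] npos
    by (simp add: n_def[symmetric] S_def[symmetric] F_def[symmetric] field_simps)
  have L0: "log_loss (pmf q) xs = - (1/n) * S"
    unfolding log_loss_def by (simp add: n_def S_def)
  have adv: "measure_pmf.expectation q f - F / n \<ge> a"
    using assms(5) unfolding train_adv_def emp_exp_def by (simp add: n_def F_def)
  have "a * (F / n) - a * measure_pmf.expectation q f \<le> - a * a"
    using mult_left_mono[OF adv assms(3)] by (simp add: algebra_simps)
  thus ?thesis using LL L0 lnZ by (simp add: power2_eq_square)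
qed

end
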